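(* Let $\mathcal{D}$ be a triangulated category with Serre functor $\mathbb{S}$ and let $\sigma\in\operatorname{Stab}\mathcal{D}$. If $\phi_\sigma(\mathbb{S})$ exists, then $\operatorname{gldim}\sigma=\phi_\sigma(\mathbb{S})$.
   Context: A Serre functor is an autoequivalence $\mathbb{S}$ with natural isomorphisms $\operatorname{Hom}(L,M)\cong\operatorname{Hom}(M,\mathbb{S}(L))^*$. For a Bridgeland stability condition $\sigma=(Z,\mathcal{P})$, an autoequivalence $\Phi$ is $\sigma$-semistable if it preserves the class of semistable objects $\bigcup_\phi\mathcal{P}(\phi)$; $\phi_\sigma(\Phi)$ exists and equals $s\in\mathbb{R}$ if $\Phi$ is $\sigma$-semistable and $\phi_\sigma(\Phi(E))-\phi_\sigma(E)=s$ for every semistable $E$, where $\phi_\sigma(E)$ is the phase of $E$. $\operatorname{gldim}\sigma=\sup\{\phi_2-\phi_1\mid \operatorname{Hom}(A_1,A_2)\neq0\text{ for some nonzero }A_i\in\mathcal{P}(\phi_i)\}$. *)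

theory Defs
  imports Complex_Main "HOL-Library.Extended_Real"
begin

record ('o, 'm, 'k) tricat =
  Ob :: "'o set"
  Hom :: "'o \<Rightarrow> 'o \<Rightarrow> 'm set"
  comp :: "'m \<Rightarrow> 'm \<Rightarrow> 'm"          (* comp g f = g o f *)
  idm :: "'o \<Rightarrow> 'm"
  madd :: "'m \<Rightarrow> 'm \<Rightarrow> 'm"
  msmult :: "'k \<Rightarrow> 'm \<Rightarrow> 'm"
  mzero :: "'o \<Rightarrow> 'o \<Rightarrow> 'm"
  shO :: "'o \<Rightarrow> 'o"                 (* shift functor [1] on objects *)
  shM :: "'m \<Rightarrow> 'm"                 (* shift functor [1] on morphisms *)
  dist :: "('o \<times> 'o \<times> 'o \<times> 'm \<times> 'm \<times> 'm) set"   (* distinguished triangles X->Y->W->X[1] *)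

definition category :: "('o, 'm, 'k) tricat \<Rightarrow> bool" where
  "category C \<longleftrightarrow>
     (\<forall>X Y. Hom C X Y \<noteq> {} \<longrightarrow> X \<in> Ob C \<and> Y \<in> Ob C) \<and>
     (\<forall>X Y X' Y'. (X, Y) \<noteq> (X', Y') \<longrightarrow> Hom C X Y \<inter> Hom C X' Y' = {}) \<and>
     (\<forall>X\<in>Ob C. idm C X \<in> Hom C X X) \<and>
     (\<forall>X\<in>Ob C. \<forall>Y\<in>Ob C. \<forall>W\<in>Ob C. \<forall>f\<in>Hom C X Y. \<forall>g\<in>Hom C Y W.
        comp C g f \<in> Hom C X W) \<and>
     (\<forall>X\<in>Ob C. \<forall>Y\<in>Ob C. \<forall>f\<in>Hom C X Y.
        comp C f (idm C X) = f \<and> comp C (idm C Y) f = f) \<and>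
     (\<forall>V\<in>Ob C. \<forall>X\<in>Ob C. \<forall>Y\<in>Ob C. \<forall>W\<in>Ob C.
        \<forall>f\<in>Hom C V X. \<forall>g\<in>Hom C X Y. \<forall>h\<in>Hom C Y W.
        comp C h (comp C g f) = comp C (comp C h g) f)"

definition klinear :: "('o, 'm, 'k::field) tricat \<Rightarrow> bool" where
  "klinear C \<longleftrightarrow> category C \<and>
     (\<forall>X\<in>Ob C. \<forall>Y\<in>Ob C.
        mzero C X Y \<in> Hom C X Y \<and>
        (\<forall>f\<in>Hom C X Y. \<forall>g\<in>Hom C X Y. madd C f g \<in> Hom C X Y) \<and>
        (\<forall>a. \<forall>f\<in>Hom C X Y. msmult C a f \<in> Hom C X Y) \<and>
        (\<forall>f\<in>Hom C X Y. \<forall>g\<in>Hom C X Y. \<forall>h\<in>Hom C X Y.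
           madd C (madd C f g) h = madd C f (madd C g h)) \<and>
        (\<forall>f\<in>Hom C X Y. \<forall>g\<in>Hom C X Y. madd C f g = madd C g f) \<and>
        (\<forall>f\<in>Hom C X Y. madd C f (mzero C X Y) = f) \<and>
        (\<forall>f\<in>Hom C X Y. \<exists>g\<in>Hom C X Y. madd C f g = mzero C X Y) \<and>
        (\<forall>a. \<forall>f\<in>Hom C X Y. \<forall>g\<in>Hom C X Y.
           msmult C a (madd C f g) = madd C (msmult C a f) (msmult C a g)) \<and>
        (\<forall>a b. \<forall>f\<in>Hom C X Y. msmult C (a + b) f = madd C (msmult C a f) (msmult C b f)) \<and>
        (\<forall>a b. \<forall>f\<in>Hom C X Y. msmult C a (msmult C b f) = msmult C (a * b) f) \<and>
        (\<forall>f\<in>Hom C X Y. msmult C 1 f = f)) \<and>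
     (\<forall>X\<in>Ob C. \<forall>Y\<in>Ob C. \<forall>W\<in>Ob C.
        \<forall>f\<in>Hom C X Y. \<forall>f'\<in>Hom C X Y. \<forall>g\<in>Hom C Y W. \<forall>g'\<in>Hom C Y W. \<forall>a.
        comp C g (madd C f f') = madd C (comp C g f) (comp C g f') \<and>
        comp C (madd C g g') f = madd C (comp C g f) (comp C g' f) \<and>
        comp C g (msmult C a f) = msmult C a (comp C g f) \<and>
        comp C (msmult C a g) f = msmult C a (comp C g f))"

fun lcomb :: "('o, 'm, 'k) tricat \<Rightarrow> 'o \<Rightarrow> 'o \<Rightarrow> ('k \<times> 'm) list \<Rightarrow> 'm" where
  "lcomb C X Y [] = mzero C X Y"
| "lcomb C X Y ((a, b) # r) = madd C (msmult C a b) (lcomb C X Y r)"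

definition hom_finite :: "('o, 'm, 'k) tricat \<Rightarrow> bool" where
  "hom_finite C \<longleftrightarrow> (\<forall>X\<in>Ob C. \<forall>Y\<in>Ob C. \<exists>bs. set bs \<subseteq> Hom C X Y \<and>
      (\<forall>f\<in>Hom C X Y. \<exists>cs. length cs = length bs \<and> f = lcomb C X Y (zip cs bs)))"

definition is_zero :: "('o, 'm, 'k) tricat \<Rightarrow> 'o \<Rightarrow> bool" where
  "is_zero C X \<longleftrightarrow> X \<in> Ob C \<and> idm C X = mzero C X X"

definition is_iso :: "('o, 'm, 'k) tricat \<Rightarrow> 'o \<Rightarrow> 'o \<Rightarrow> 'm \<Rightarrow> bool" where
  "is_iso C X Y f \<longleftrightarrow> f \<in> Hom C X Y \<and>
     (\<exists>g\<in>Hom C Y X. comp C g f = idm C X \<and> comp C f g = idm C Y)"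

definition isomorphic :: "('o, 'm, 'k) tricat \<Rightarrow> 'o \<Rightarrow> 'o \<Rightarrow> bool" where
  "isomorphic C X Y \<longleftrightarrow> (\<exists>f. is_iso C X Y f)"

definition is_biproduct ::
  "('o, 'm, 'k) tricat \<Rightarrow> 'o \<Rightarrow> 'o \<Rightarrow> 'o \<Rightarrow> 'm \<Rightarrow> 'm \<Rightarrow> 'm \<Rightarrow> 'm \<Rightarrow> bool" where
  "is_biproduct C X Y W i1 i2 p1 p2 \<longleftrightarrow> W \<in> Ob C \<and>
     i1 \<in> Hom C X W \<and> i2 \<in> Hom C Y W \<and> p1 \<in> Hom C W X \<and> p2 \<in> Hom C W Y \<and>
     comp C p1 i1 = idm C X \<and> comp C p2 i2 = idm C Y \<and>
     comp C p1 i2 = mzero C Y X \<and> comp C p2 i1 = mzero C X Y \<and>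
     madd C (comp C i1 p1) (comp C i2 p2) = idm C W"

definition additive :: "('o, 'm, 'k::field) tricat \<Rightarrow> bool" where
  "additive C \<longleftrightarrow> klinear C \<and> (\<exists>X. is_zero C X) \<and>
     (\<forall>X\<in>Ob C. \<forall>Y\<in>Ob C. \<exists>W i1 i2 p1 p2. is_biproduct C X Y W i1 i2 p1 p2)"

definition kfunctor :: "('o, 'm, 'k) tricat \<Rightarrow> ('o \<Rightarrow> 'o) \<Rightarrow> ('m \<Rightarrow> 'm) \<Rightarrow> bool" where
  "kfunctor C Fo Fm \<longleftrightarrow>
     (\<forall>X\<in>Ob C. Fo X \<in> Ob C) \<and>
     (\<forall>X\<in>Ob C. \<forall>Y\<in>Ob C. \<forall>f\<in>Hom C X Y. Fm f \<in> Hom C (Fo X) (Fo Y)) \<and>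
     (\<forall>X\<in>Ob C. Fm (idm C X) = idm C (Fo X)) \<and>
     (\<forall>X\<in>Ob C. \<forall>Y\<in>Ob C. \<forall>W\<in>Ob C. \<forall>f\<in>Hom C X Y. \<forall>g\<in>Hom C Y W.
        Fm (comp C g f) = comp C (Fm g) (Fm f)) \<and>
     (\<forall>X\<in>Ob C. \<forall>Y\<in>Ob C. \<forall>f\<in>Hom C X Y. \<forall>g\<in>Hom C X Y. \<forall>a.
        Fm (madd C f g) = madd C (Fm f) (Fm g) \<and> Fm (msmult C a f) = msmult C a (Fm f))"

definition autoequiv :: "('o, 'm, 'k) tricat \<Rightarrow> ('o \<Rightarrow> 'o) \<Rightarrow> ('m \<Rightarrow> 'm) \<Rightarrow> bool" where
  "autoequiv C Fo Fm \<longleftrightarrow> kfunctor C Fo Fm \<and>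
     (\<forall>X\<in>Ob C. \<forall>Y\<in>Ob C. bij_betw Fm (Hom C X Y) (Hom C (Fo X) (Fo Y))) \<and>
     (\<forall>Y\<in>Ob C. \<exists>X\<in>Ob C. isomorphic C (Fo X) Y)"

definition triangle :: "('o, 'm, 'k) tricat \<Rightarrow> 'o \<Rightarrow> 'o \<Rightarrow> 'o \<Rightarrow> 'm \<Rightarrow> 'm \<Rightarrow> 'm \<Rightarrow> bool" where
  "triangle C X Y W f g h \<longleftrightarrow> X \<in> Ob C \<and> Y \<in> Ob C \<and> W \<in> Ob C \<and>
     f \<in> Hom C X Y \<and> g \<in> Hom C Y W \<and> h \<in> Hom C W (shO C X)"

definition tri_morphism ::
  "('o, 'm, 'k) tricat \<Rightarrow> 'o \<Rightarrow> 'o \<Rightarrow> 'o \<Rightarrow> 'm \<Rightarrow> 'm \<Rightarrow> 'm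
     \<Rightarrow> 'o \<Rightarrow> 'o \<Rightarrow> 'o \<Rightarrow> 'm \<Rightarrow> 'm \<Rightarrow> 'm \<Rightarrow> 'm \<Rightarrow> 'm \<Rightarrow> 'm \<Rightarrow> bool" where
  "tri_morphism C X Y W f g h X' Y' W' f' g' h' a b c \<longleftrightarrow>
     a \<in> Hom C X X' \<and> b \<in> Hom C Y Y' \<and> c \<in> Hom C W W' \<and>
     comp C f' a = comp C b f \<and> comp C g' b = comp C c g \<and>
     comp C (shM C a) h = comp C h' c"

definition mneg :: "('o, 'm, 'k::field) tricat \<Rightarrow> 'm \<Rightarrow> 'm" where
  "mneg C f = msmult C (- 1) f"

definition triangulated :: "('o, 'm, 'k::field) tricat \<Rightarrow> bool" where
  "triangulated C \<longleftrightarrow> additive C \<and> hom_finite C \<and> autoequiv C (shO C) (shM C) \<and>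
     (\<forall>X Y W f g h. (X, Y, W, f, g, h) \<in> dist C \<longrightarrow> triangle C X Y W f g h) \<and>
     \<comment> \<open>TR1: closed under isomorphisms of triangles\<close>
     (\<forall>X Y W f g h X' Y' W' f' g' h' a b c.
        (X, Y, W, f, g, h) \<in> dist C \<longrightarrow> triangle C X' Y' W' f' g' h' \<longrightarrow>
        tri_morphism C X Y W f g h X' Y' W' f' g' h' a b c \<longrightarrow>
        is_iso C X X' a \<longrightarrow> is_iso C Y Y' b \<longrightarrow> is_iso C W W' c \<longrightarrow>
        (X', Y', W', f', g', h') \<in> dist C) \<and>
     \<comment> \<open>TR1: X -> X -> 0 -> X[1]\<close>
     (\<forall>X\<in>Ob C. \<forall>Z0. is_zero C Z0 \<longrightarrow>
        (X, X, Z0, idm C X, mzero C X Z0, mzero C Z0 (shO C X)) \<in> dist C) \<and>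
     \<comment> \<open>TR1: every morphism extends to a distinguished triangle\<close>
     (\<forall>X\<in>Ob C. \<forall>Y\<in>Ob C. \<forall>f\<in>Hom C X Y. \<exists>W g h. (X, Y, W, f, g, h) \<in> dist C) \<and>
     \<comment> \<open>TR2: rotation\<close>
     (\<forall>X Y W f g h. triangle C X Y W f g h \<longrightarrow>
        ((X, Y, W, f, g, h) \<in> dist C \<longleftrightarrow>
         (Y, W, shO C X, g, h, mneg C (shM C f)) \<in> dist C)) \<and>
     \<comment> \<open>TR3: completion of morphisms of triangles\<close>
     (\<forall>X Y W f g h X' Y' W' f' g' h' a b.
        (X, Y, W, f, g, h) \<in> dist C \<longrightarrow> (X', Y', W', f', g', h') \<in> dist C \<longrightarrow>
        a \<in> Hom C X X' \<longrightarrow> b \<in> Hom C Y Y' \<longrightarrow> comp C f' a = comp C b f \<longrightarrow>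
        (\<exists>c. tri_morphism C X Y W f g h X' Y' W' f' g' h' a b c)) \<and>
     \<comment> \<open>TR4: octahedral axiom\<close>
     (\<forall>X Y Z Z' X' Y' f g h j k l m n.
        (X, Y, Z', f, h, j) \<in> dist C \<longrightarrow>
        (Y, Z, X', g, k, l) \<in> dist C \<longrightarrow>
        (X, Z, Y', comp C g f, m, n) \<in> dist C \<longrightarrow>
        (\<exists>u v. (Z', Y', X', u, v, comp C (shM C h) l) \<in> dist C \<and>
               comp C u h = comp C m g \<and> comp C n u = j \<and>
               comp C v m = k \<and> comp C l v = comp C (shM C f) n))"

definition lin_funcs :: "('o, 'm, 'k::field) tricat \<Rightarrow> 'o \<Rightarrow> 'o \<Rightarrow> ('m \<Rightarrow> 'k) set" where
  "lin_funcs C X Y = {\<phi>.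
     (\<forall>f\<in>Hom C X Y. \<forall>g\<in>Hom C X Y. \<phi> (madd C f g) = \<phi> f + \<phi> g) \<and>
     (\<forall>a. \<forall>f\<in>Hom C X Y. \<phi> (msmult C a f) = a * \<phi> f) \<and>
     (\<forall>f. f \<notin> Hom C X Y \<longrightarrow> \<phi> f = 0)}"

text \<open>A Serre functor: a (k-linear) autoequivalence S together with isomorphisms
  Hom(L,M) = Hom(M, S L)^* (k-linear, natural in L and M).\<close>

definition serre_functor :: "('o, 'm, 'k::field) tricat \<Rightarrow> ('o \<Rightarrow> 'o) \<Rightarrow> ('m \<Rightarrow> 'm) \<Rightarrow> bool" where
  "serre_functor C So Sm \<longleftrightarrow> autoequiv C So Sm \<and>
     (\<exists>\<eta> :: 'o \<Rightarrow> 'o \<Rightarrow> 'm \<Rightarrow> 'm \<Rightarrow> 'k.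
        (\<forall>L\<in>Ob C. \<forall>M\<in>Ob C.
           bij_betw (\<eta> L M) (Hom C L M) (lin_funcs C M (So L)) \<and>
           (\<forall>u\<in>Hom C L M. \<forall>u'\<in>Hom C L M. \<forall>a.
              \<eta> L M (madd C u u') = (\<lambda>v. \<eta> L M u v + \<eta> L M u' v) \<and>
              \<eta> L M (msmult C a u) = (\<lambda>v. a * \<eta> L M u v)) \<and>
           (\<forall>M'\<in>Ob C. \<forall>u\<in>Hom C L M. \<forall>g\<in>Hom C M M'. \<forall>v\<in>Hom C M' (So L).
              \<eta> L M' (comp C g u) v = \<eta> L M u (comp C v g)) \<and>
           (\<forall>L'\<in>Ob C. \<forall>u\<in>Hom C L M. \<forall>f\<in>Hom C L' L. \<forall>v\<in>Hom C M (So L').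
              \<eta> L' M (comp C u f) v = \<eta> L M u (comp C (Sm f) v))))"

definition slicing :: "('o, 'm, 'k::field) tricat \<Rightarrow> (real \<Rightarrow> 'o set) \<Rightarrow> bool" where
  "slicing C P \<longleftrightarrow>
     (\<forall>\<phi>. P \<phi> \<subseteq> Ob C) \<and>
     \<comment> \<open>each P(phi) is a (strictly) full additive subcategory\<close>
     (\<forall>\<phi> Z0. is_zero C Z0 \<longrightarrow> Z0 \<in> P \<phi>) \<and>
     (\<forall>\<phi>. \<forall>A\<in>P \<phi>. \<forall>B. isomorphic C A B \<longrightarrow> B \<in> P \<phi>) \<and>
     (\<forall>\<phi>. \<forall>A\<in>P \<phi>. \<forall>B\<in>P \<phi>. \<forall>W i1 i2 p1 p2.
        is_biproduct C A B W i1 i2 p1 p2 \<longrightarrow> W \<in> P \<phi>) \<and>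
     \<comment> \<open>P(phi + 1) = P(phi)[1]\<close>
     (\<forall>\<phi> A. A \<in> P (\<phi> + 1) \<longleftrightarrow> (\<exists>B\<in>P \<phi>. isomorphic C A (shO C B))) \<and>
     \<comment> \<open>Hom-vanishing\<close>
     (\<forall>\<phi>1 \<phi>2. \<phi>1 > \<phi>2 \<longrightarrow> (\<forall>A1\<in>P \<phi>1. \<forall>A2\<in>P \<phi>2. Hom C A1 A2 = {mzero C A1 A2})) \<and>
     \<comment> \<open>Harder--Narasimhan filtrations\<close>
     (\<forall>E\<in>Ob C. \<not> is_zero C E \<longrightarrow>
        (\<exists>(n::nat) (Eo::nat \<Rightarrow> 'o) (A::nat \<Rightarrow> 'o) (ph::nat \<Rightarrow> real) f g h.
           is_zero C (Eo 0) \<and> Eo n = E \<and>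
           (\<forall>i\<in>{1..n}. (Eo (i - 1), Eo i, A i, f i, g i, h i) \<in> dist C \<and> A i \<in> P (ph i)) \<and>
           (\<forall>i j. 1 \<le> i \<longrightarrow> i < j \<longrightarrow> j \<le> n \<longrightarrow> ph j < ph i)))"

text \<open>The central charge Z : K_0(D) -> C is encoded by the induced function on objects,
  i.e. a function additive on distinguished triangles (universal property of K_0).\<close>

definition stability_condition ::
  "('o, 'm, 'k::field) tricat \<Rightarrow> ('o \<Rightarrow> complex) \<Rightarrow> (real \<Rightarrow> 'o set) \<Rightarrow> bool" where
  "stability_condition C Z P \<longleftrightarrow> slicing C P \<and>
     (\<forall>X Y W f g h. (X, Y, W, f, g, h) \<in> dist C \<longrightarrow> Z Y = Z X + Z W) \<and>
     (\<forall>\<phi>. \<forall>E\<in>P \<phi>. \<not> is_zero C E \<longrightarrow>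
        (\<exists>m::real. m > 0 \<and> Z E = complex_of_real m * cis (pi * \<phi>)))"

definition semistables :: "(real \<Rightarrow> 'o set) \<Rightarrow> 'o set" where
  "semistables P = (\<Union>\<phi>. P \<phi>)"

definition phase :: "(real \<Rightarrow> 'o set) \<Rightarrow> 'o \<Rightarrow> real" where
  "phase P E = (THE \<phi>. E \<in> P \<phi>)"

text \<open>phi_sigma(Phi) exists and equals s.\<close>

definition functor_phase :: "('o, 'm, 'k) tricat \<Rightarrow> (real \<Rightarrow> 'o set) \<Rightarrow> ('o \<Rightarrow> 'o) \<Rightarrow> real \<Rightarrow> bool" where
  "functor_phase C P Fo s \<longleftrightarrow>
     (\<forall>E\<in>semistables P. Fo E \<in> semistables P) \<and>
     (\<forall>E\<in>semistables P. \<not> is_zero C E \<longrightarrow> phase P (Fo E) - phase P E = s)"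

definition gldim :: "('o, 'm, 'k) tricat \<Rightarrow> (real \<Rightarrow> 'o set) \<Rightarrow> ereal" where
  "gldim C P = Sup {ereal (\<phi>2 - \<phi>1) | \<phi>1 \<phi>2. \<exists>A1\<in>P \<phi>1. \<exists>A2\<in>P \<phi>2.
      \<not> is_zero C A1 \<and> \<not> is_zero C A2 \<and> Hom C A1 A2 \<noteq> {mzero C A1 A2}}"

end

theory Submission
  imports Defs
begin



lemma kl_cat: "klinear C \<Longrightarrow> category C" unfolding klinear_def by blast

lemma hom_ob: "category C \<Longrightarrow> f \<in> Hom C X Y \<Longrightarrow> X \<in> Ob C \<and> Y \<in> Ob C"
  unfolding category_def by (metis empty_iff)

lemma idm_in: "category C \<Longrightarrow> X \<in> Ob C \<Longrightarrow> idm C X \<in> Hom C X X"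
  unfolding category_def by blast

lemma comp_in: "category C \<Longrightarrow> f \<in> Hom C X Y \<Longrightarrow> g \<in> Hom C Y W \<Longrightarrow> comp C g f \<in> Hom C X W"
  unfolding category_def by (metis (no_types, lifting) empty_iff)

lemma comp_id: "category C \<Longrightarrow> f \<in> Hom C X Y \<Longrightarrow> comp C f (idm C X) = f \<and> comp C (idm C Y) f = f"
  unfolding category_def by (metis (no_types, lifting) empty_iff)


lemma klinD: "klinear C \<Longrightarrow> X \<in> Ob C \<Longrightarrow> Y \<in> Ob C \<Longrightarrow>
        mzero C X Y \<in> Hom C X Y \<and>
        (\<forall>f\<in>Hom C X Y. \<forall>g\<in>Hom C X Y. madd C f g \<in> Hom C X Y) \<and>
        (\<forall>a. \<forall>f\<in>Hom C X Y. msmult C a f \<in> Hom C X Y) \<and>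
        (\<forall>f\<in>Hom C X Y. \<forall>g\<in>Hom C X Y. \<forall>h\<in>Hom C X Y.
           madd C (madd C f g) h = madd C f (madd C g h)) \<and>
        (\<forall>f\<in>Hom C X Y. \<forall>g\<in>Hom C X Y. madd C f g = madd C g f) \<and>
        (\<forall>f\<in>Hom C X Y. madd C f (mzero C X Y) = f) \<and>
        (\<forall>f\<in>Hom C X Y. \<exists>g\<in>Hom C X Y. madd C f g = mzero C X Y) \<and>
        (\<forall>a. \<forall>f\<in>Hom C X Y. \<forall>g\<in>Hom C X Y.
           msmult C a (madd C f g) = madd C (msmult C a f) (msmult C a g)) \<and>
        (\<forall>a b. \<forall>f\<in>Hom C X Y. msmult C (a + b) f = madd C (msmult C a f) (msmult C b f)) \<and>
        (\<forall>a b. \<forall>f\<in>Hom C X Y. msmult C a (msmult C b f) = msmult C (a * b) f) \<and>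
        (\<forall>f\<in>Hom C X Y. msmult C 1 f = f)"
  apply (drule klinear_def[THEN iffD1, THEN conjunct2, THEN conjunct1])
  apply (drule bspec[where x=X], assumption)
  apply (drule bspec[where x=Y], assumption)
  apply assumption
  done
lemma klinD2: "klinear C \<Longrightarrow> X \<in> Ob C \<Longrightarrow> Y \<in> Ob C \<Longrightarrow> W \<in> Ob C \<Longrightarrow>
        \<forall>f\<in>Hom C X Y. \<forall>f'\<in>Hom C X Y. \<forall>g\<in>Hom C Y W. \<forall>g'\<in>Hom C Y W. \<forall>a.
        comp C g (madd C f f') = madd C (comp C g f) (comp C g f') \<and>
        comp C (madd C g g') f = madd C (comp C g f) (comp C g' f) \<and>
        comp C g (msmult C a f) = msmult C a (comp C g f) \<and>
        comp C (msmult C a g) f = msmult C a (comp C g f)"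
  apply (drule klinear_def[THEN iffD1, THEN conjunct2, THEN conjunct2])
  apply (drule bspec[where x=X], assumption)
  apply (drule bspec[where x=Y], assumption)
  apply (drule bspec[where x=W], assumption)
  apply assumption
  done
lemma madd_in: "klinear C \<Longrightarrow> X \<in> Ob C \<Longrightarrow> Y \<in> Ob C \<Longrightarrow> f \<in> Hom C X Y \<Longrightarrow> g \<in> Hom C X Y \<Longrightarrow> madd C f g \<in> Hom C X Y"
  by (meson klinD)
lemma msmult_in: "klinear C \<Longrightarrow> X \<in> Ob C \<Longrightarrow> Y \<in> Ob C \<Longrightarrow> f \<in> Hom C X Y \<Longrightarrow> msmult C a f \<in> Hom C X Y"
  by (meson klinD)
lemma comp_smult: "klinear C \<Longrightarrow> X \<in> Ob C \<Longrightarrow> Y \<in> Ob C \<Longrightarrow> W \<in> Ob C \<Longrightarrow> f \<in> Hom C X Y \<Longrightarrow> g \<in> Hom C Y W \<Longrightarrow>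
   comp C g (msmult C a f) = msmult C a (comp C g f) \<and> comp C (msmult C a g) f = msmult C a (comp C g f)"
  by (meson klinD2)

lemma mzero_in: "klinear C \<Longrightarrow> X \<in> Ob C \<Longrightarrow> Y \<in> Ob C \<Longrightarrow> mzero C X Y \<in> Hom C X Y"
  by (meson klinD)
lemma madd_assoc: "klinear C \<Longrightarrow> X \<in> Ob C \<Longrightarrow> Y \<in> Ob C \<Longrightarrow> f \<in> Hom C X Y \<Longrightarrow> g \<in> Hom C X Y \<Longrightarrow> h \<in> Hom C X Y \<Longrightarrow> madd C (madd C f g) h = madd C f (madd C g h)"
  by (meson klinD)
lemma madd_zero: "klinear C \<Longrightarrow> X \<in> Ob C \<Longrightarrow> Y \<in> Ob C \<Longrightarrow> f \<in> Hom C X Y \<Longrightarrow> madd C f (mzero C X Y) = f"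
  by (meson klinD)
lemma madd_inv: "klinear C \<Longrightarrow> X \<in> Ob C \<Longrightarrow> Y \<in> Ob C \<Longrightarrow> f \<in> Hom C X Y \<Longrightarrow> \<exists>g\<in>Hom C X Y. madd C f g = mzero C X Y"
  by (meson klinD)
lemma msmult_add: "klinear C \<Longrightarrow> X \<in> Ob C \<Longrightarrow> Y \<in> Ob C \<Longrightarrow> f \<in> Hom C X Y \<Longrightarrow> msmult C (a + b) f = madd C (msmult C a f) (msmult C b f)"
  by (meson klinD)

lemma smult0:
  assumes k: "klinear C" and o: "X \<in> Ob C" "Y \<in> Ob C" and u: "u \<in> Hom C X Y"
  shows "msmult C 0 u = mzero C X Y"
proof -
  define h where "h = msmult C 0 u"
  have hin: "h \<in> Hom C X Y" using msmult_in[OF k o u] h_def by simp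
  have hh: "madd C h h = h" using msmult_add[OF k o u, of 0 0] h_def by simp
  obtain h' where h': "h' \<in> Hom C X Y" "madd C h h' = mzero C X Y" using madd_inv[OF k o hin] by blast
  have "madd C (madd C h h) h' = madd C h (madd C h h')" using madd_assoc[OF k o hin hin h'(1)] .
  then have "mzero C X Y = h" using hh h' madd_zero[OF k o hin] by simp
  then show ?thesis using h_def by simp
qed

lemma comp_zero_right:
  assumes k: "klinear C" and o: "X \<in> Ob C" "Y \<in> Ob C" "W \<in> Ob C" and g: "g \<in> Hom C Y W"
  shows "comp C g (mzero C X Y) = mzero C X W"
proof -
  have z: "mzero C X Y \<in> Hom C X Y" using mzero_in[OF k o(1,2)] .
  have "comp C g (mzero C X Y) = comp C g (msmult C 0 (mzero C X Y))" using smult0[OF k o(1,2) z] by simp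
  also have "\<dots> = msmult C 0 (comp C g (mzero C X Y))" using comp_smult[OF k o z g] by blast
  also have "\<dots> = mzero C X W" using smult0[OF k o(1,3) comp_in[OF kl_cat[OF k] z g]] .
  finally show ?thesis .
qed

lemma comp_zero_left:
  assumes k: "klinear C" and o: "X \<in> Ob C" "Y \<in> Ob C" "W \<in> Ob C" and f: "f \<in> Hom C X Y"
  shows "comp C (mzero C Y W) f = mzero C X W"
proof -
  have z: "mzero C Y W \<in> Hom C Y W" using mzero_in[OF k o(2,3)] .
  have "comp C (mzero C Y W) f = comp C (msmult C 0 (mzero C Y W)) f" using smult0[OF k o(2,3) z] by simp
  also have "\<dots> = msmult C 0 (comp C (mzero C Y W) f)" using comp_smult[OF k o f z] by blast
  also have "\<dots> = mzero C X W" using smult0[OF k o(1,3) comp_in[OF kl_cat[OF k] f z]] .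
  finally show ?thesis .
qed

lemma hom_from_zero:
  assumes k: "klinear C" and z: "is_zero C X" and f: "f \<in> Hom C X Y"
  shows "f = mzero C X Y"
proof -
  have c: "category C" using kl_cat[OF k] .
  have o: "X \<in> Ob C" "Y \<in> Ob C" using hom_ob[OF c f] by auto
  have "f = comp C f (idm C X)" using comp_id[OF c f] by simp
  also have "\<dots> = comp C f (mzero C X X)" using z unfolding is_zero_def by simp
  also have "\<dots> = mzero C X Y" using comp_zero_right[OF k o(1) o(1) o(2) f] .
  finally show ?thesis .
qed

lemma hom_to_zero:
  assumes k: "klinear C" and z: "is_zero C Y" and f: "f \<in> Hom C X Y"
  shows "f = mzero C X Y"
proof -
  have c: "category C" using kl_cat[OF k] .
  have o: "X \<in> Ob C" "Y \<in> Ob C" using hom_ob[OF c f] by auto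
  have "f = comp C (idm C Y) f" using comp_id[OF c f] by simp
  also have "\<dots> = comp C (mzero C Y Y) f" using z unfolding is_zero_def by simp
  also have "\<dots> = mzero C X Y" using comp_zero_left[OF k o(1) o(2) o(2) f] .
  finally show ?thesis .
qed

lemma zero_hom_single:
  assumes k: "klinear C" and o: "X \<in> Ob C" "Y \<in> Ob C" and z: "is_zero C X \<or> is_zero C Y"
  shows "Hom C X Y = {mzero C X Y}"
  using hom_from_zero[OF k] hom_to_zero[OF k] mzero_in[OF k o] z by blast



lemma triD:
  assumes "triangulated C"
  shows "klinear C" "autoequiv C (shO C) (shM C)"
    "\<forall>X Y W f g h. (X, Y, W, f, g, h) \<in> dist C \<longrightarrow> triangle C X Y W f g h"
    "\<forall>X\<in>Ob C. \<forall>Z0. is_zero C Z0 \<longrightarrow>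
        (X, X, Z0, idm C X, mzero C X Z0, mzero C Z0 (shO C X)) \<in> dist C"
    "\<forall>X Y W f g h. triangle C X Y W f g h \<longrightarrow>
        ((X, Y, W, f, g, h) \<in> dist C \<longleftrightarrow>
         (Y, W, shO C X, g, h, mneg C (shM C f)) \<in> dist C)"
    "\<forall>X Y W f g h X' Y' W' f' g' h' a b.
        (X, Y, W, f, g, h) \<in> dist C \<longrightarrow> (X', Y', W', f', g', h') \<in> dist C \<longrightarrow>
        a \<in> Hom C X X' \<longrightarrow> b \<in> Hom C Y Y' \<longrightarrow> comp C f' a = comp C b f \<longrightarrow>
        (\<exists>c. tri_morphism C X Y W f g h X' Y' W' f' g' h' a b c)"
  using assms unfolding triangulated_def additive_def
  apply -
  apply (elim conjE, assumption)+
  done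

lemma kfD:
  assumes "kfunctor C Fo Fm"
  shows "\<forall>X\<in>Ob C. Fo X \<in> Ob C"
     "\<forall>X\<in>Ob C. \<forall>Y\<in>Ob C. \<forall>f\<in>Hom C X Y. Fm f \<in> Hom C (Fo X) (Fo Y)"
     "\<forall>X\<in>Ob C. Fm (idm C X) = idm C (Fo X)"
     "\<forall>X\<in>Ob C. \<forall>Y\<in>Ob C. \<forall>f\<in>Hom C X Y. \<forall>g\<in>Hom C X Y. \<forall>a.
        Fm (madd C f g) = madd C (Fm f) (Fm g) \<and> Fm (msmult C a f) = msmult C a (Fm f)"
  using assms unfolding kfunctor_def
  apply -
  apply (elim conjE, assumption)+
  done

lemma slD:
  assumes "slicing C P"
  shows "\<forall>\<phi>. P \<phi> \<subseteq> Ob C"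
    "\<forall>\<phi>1 \<phi>2. \<phi>1 > \<phi>2 \<longrightarrow> (\<forall>A1\<in>P \<phi>1. \<forall>A2\<in>P \<phi>2. Hom C A1 A2 = {mzero C A1 A2})"
    "\<forall>E\<in>Ob C. \<not> is_zero C E \<longrightarrow>
        (\<exists>(n::nat) (Eo::nat \<Rightarrow> 'o) (A::nat \<Rightarrow> 'o) (ph::nat \<Rightarrow> real) f g h.
           is_zero C (Eo 0) \<and> Eo n = E \<and>
           (\<forall>i\<in>{1..n}. (Eo (i - 1), Eo i, A i, f i, g i, h i) \<in> dist C \<and> A i \<in> P (ph i)) \<and>
           (\<forall>i j. 1 \<le> i \<longrightarrow> i < j \<longrightarrow> j \<le> n \<longrightarrow> ph j < ph i))"
  using assms unfolding slicing_def
  apply -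
  apply (elim conjE, assumption)+
  done

lemma shift_zero:
  assumes t: "triangulated C" and z: "is_zero C X"
  shows "is_zero C (shO C X)"
proof -
  have k: "klinear C" using triD[OF t] by simp
  have kf: "kfunctor C (shO C) (shM C)" using triD(2)[OF t] unfolding autoequiv_def by simp
  have X: "X \<in> Ob C" using z unfolding is_zero_def by simp
  have SX: "shO C X \<in> Ob C" using kfD(1)[OF kf] X by blast
  have m: "mzero C X X \<in> Hom C X X" using mzero_in[OF k X X] .
  have "idm C (shO C X) = shM C (idm C X)" using kfD(3)[OF kf] X by simp
  also have "\<dots> = shM C (msmult C 0 (mzero C X X))" using z smult0[OF k X X m] unfolding is_zero_def by simp
  also have "\<dots> = msmult C 0 (shM C (mzero C X X))" using kfD(4)[OF kf] X m by blast
  also have "\<dots> = mzero C (shO C X) (shO C X)"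
    using smult0[OF k SX SX] kfD(2)[OF kf] X m by blast
  finally show ?thesis unfolding is_zero_def using SX by simp
qed

lemma cone_zero:
  assumes t: "triangulated C" and d: "(X, Y, W, f, g, h) \<in> dist C"
    and zX: "is_zero C X" and zW: "is_zero C W"
  shows "is_zero C Y"
proof -
  have k: "klinear C" using triD[OF t] by simp
  have c: "category C" using kl_cat[OF k] .
  have kf: "kfunctor C (shO C) (shM C)" using triD(2)[OF t] unfolding autoequiv_def by simp
  have tr: "triangle C X Y W f g h" using triD(3)[OF t] d by blast
  then have o: "X \<in> Ob C" "Y \<in> Ob C" "W \<in> Ob C" and fg: "f \<in> Hom C X Y" "g \<in> Hom C Y W"
    unfolding triangle_def by auto
  have SX: "shO C X \<in> Ob C" using kfD(1)[OF kf] o by blast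
  have SY: "shO C Y \<in> Ob C" using kfD(1)[OF kf] o by blast
  have zSX: "is_zero C (shO C X)" using shift_zero[OF t zX] .
  have tr2: "triangle C X Y Y (mzero C X Y) (idm C Y) (mzero C Y (shO C X))"
    unfolding triangle_def using o SX mzero_in[OF k] idm_in[OF c] by blast
  have sm: "shM C (mzero C X Y) \<in> Hom C (shO C X) (shO C Y)"
    using kfD(2)[OF kf] o mzero_in[OF k o(1,2)] by blast
  have "mneg C (shM C (mzero C X Y)) \<in> Hom C (shO C X) (shO C Y)"
    unfolding mneg_def using msmult_in[OF k SX SY sm] .
  then have mn: "mneg C (shM C (mzero C X Y)) = mzero C (shO C X) (shO C Y)"
    using hom_from_zero[OF k zSX] by blast
  have "(Y, Y, shO C X, idm C Y, mzero C Y (shO C X), mzero C (shO C X) (shO C Y)) \<in> dist C"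
    using triD(4)[OF t] o zSX by blast
  then have d2: "(X, Y, Y, mzero C X Y, idm C Y, mzero C Y (shO C X)) \<in> dist C"
    using triD(5)[OF t, rule_format, OF tr2] mn by simp
  have f0: "f = mzero C X Y" using hom_from_zero[OF k zX fg(1)] .
  have cm: "comp C (mzero C X Y) (idm C X) = comp C (idm C Y) f"
    using comp_id[OF c fg(1)] comp_id[OF c mzero_in[OF k o(1,2)]] f0 by simp
  obtain cc where cc: "tri_morphism C X Y W f g h X Y Y (mzero C X Y) (idm C Y) (mzero C Y (shO C X)) (idm C X) (idm C Y) cc"
    using triD(6)[OF t] d d2 idm_in[OF c o(1)] idm_in[OF c o(2)] cm by blast
  then have ccH: "cc \<in> Hom C W Y" and ce: "comp C (idm C Y) (idm C Y) = comp C cc g"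
    unfolding tri_morphism_def by auto
  have "cc = mzero C W Y" using hom_from_zero[OF k zW ccH] .
  then have "comp C cc g = mzero C Y Y" using comp_zero_left[OF k o(2) o(3) o(2) fg(2)] by simp
  moreover have "comp C (idm C Y) (idm C Y) = idm C Y" using comp_id[OF c idm_in[OF c o(2)]] by simp
  ultimately show ?thesis using ce o unfolding is_zero_def by simp
qed


lemma exists_nonzero_ss:
  assumes t: "triangulated C" and sl: "slicing C P" and ex: "\<exists>X\<in>Ob C. \<not> is_zero C X"
  shows "\<exists>\<phi> A. A \<in> P \<phi> \<and> \<not> is_zero C A"
proof -
  obtain E where E: "E \<in> Ob C" "\<not> is_zero C E" using ex by blast
  obtain n Eo A ph f g h where hn: "is_zero C (Eo (0::nat))" "Eo n = E"
     "\<forall>i\<in>{1..n}. (Eo (i - 1), Eo i, A i, f i, g i, h i) \<in> dist C \<and> A i \<in> P (ph i)"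
    using slD(3)[OF sl, rule_format, OF E] by blast
  define i where "i = (LEAST i. \<not> is_zero C (Eo i))"
  have ni: "\<not> is_zero C (Eo i)" unfolding i_def by (rule LeastI[of _ n]) (use hn E in simp)
  have "i \<le> n" unfolding i_def by (rule Least_le) (use hn E in simp)
  moreover have "i \<noteq> 0" using ni hn(1) by (cases i) auto
  ultimately have iin: "i \<in> {1..n}" by simp
  have "is_zero C (Eo (i - 1))"
    using not_less_Least[of "i - 1" "\<lambda>i. \<not> is_zero C (Eo i)"] \<open>i \<noteq> 0\<close> unfolding i_def[symmetric] by simp
  moreover have d: "(Eo (i - 1), Eo i, A i, f i, g i, h i) \<in> dist C" "A i \<in> P (ph i)" using hn(3) iin by auto
  ultimately have "\<not> is_zero C (A i)" using cone_zero[OF t d(1)] ni by blast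
  then show ?thesis using d(2) by blast
qed

lemma phase_unique:
  assumes k: "klinear C" and sl: "slicing C P" and A: "A \<in> P \<phi>" and nz: "\<not> is_zero C A"
  shows "phase P A = \<phi>"
  unfolding phase_def
proof (rule the_equality)
  show "A \<in> P \<phi>" using A .
next
  fix \<psi> assume B: "A \<in> P \<psi>"
  have Ao: "A \<in> Ob C" using slD(1)[OF sl] A by blast
  have idm: "idm C A \<in> Hom C A A" using idm_in[OF kl_cat[OF k] Ao] .
  show "\<psi> = \<phi>"
  proof (rule ccontr)
    assume "\<psi> \<noteq> \<phi>"
    then have "\<psi> > \<phi> \<or> \<phi> > \<psi>" by auto
    then have "Hom C A A = {mzero C A A}"
    proof
      assume "\<psi> > \<phi>" then show ?thesis using spec[OF spec[OF slD(2)[OF sl], of \<psi>], of \<phi>] A B by blast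
    next
      assume "\<phi> > \<psi>" then show ?thesis using spec[OF spec[OF slD(2)[OF sl], of \<phi>], of \<psi>] A B by blast
    qed
    then have "is_zero C A" using idm Ao unfolding is_zero_def by simp
    then show False using nz by simp
  qed
qed

lemma lin_single:
  assumes k: "klinear C" and o: "M \<in> Ob C" "N \<in> Ob C" and H: "Hom C M N = {mzero C M N}"
  shows "lin_funcs C M N \<subseteq> {\<lambda>_. 0}"
proof
  fix \<phi> assume p: "\<phi> \<in> lin_funcs C M N"
  have z: "mzero C M N \<in> Hom C M N" using H by simp
  have "\<phi> (madd C (mzero C M N) (mzero C M N)) = \<phi> (mzero C M N) + \<phi> (mzero C M N)"
    using p z unfolding lin_funcs_def by blast
  then have "\<phi> (mzero C M N) = \<phi> (mzero C M N) + \<phi> (mzero C M N)"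
    using madd_zero[OF k o z] by simp
  then have z0: "\<phi> (mzero C M N) = 0" by (metis add_cancel_right_right)
  have "\<phi> = (\<lambda>_. 0)"
  proof
    fix x show "\<phi> x = 0"
    proof (cases "x \<in> Hom C M N")
      case True then show ?thesis using H z0 by simp
    next
      case False then show ?thesis using p unfolding lin_funcs_def by blast
    qed
  qed
  then show "\<phi> \<in> {\<lambda>_. 0}" by simp
qed

lemma serreD:
  assumes S: "serre_functor C So Sm" and o: "L \<in> Ob C" "M \<in> Ob C"
  shows "\<exists>\<eta>. bij_betw \<eta> (Hom C L M) (lin_funcs C M (So L))"
  using S unfolding serre_functor_def
  apply (elim conjE exE)
  apply (drule bspec[where x=L], rule o(1))
  apply (drule bspec[where x=M], rule o(2))
  apply (elim conjE)
  apply (rule exI)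
  apply assumption
  done

lemma serre_nonzero:
  assumes k: "klinear C" and S: "serre_functor C So Sm" and o: "L \<in> Ob C" "M \<in> Ob C"
    and H: "Hom C L M \<noteq> {mzero C L M}"
  shows "Hom C M (So L) \<noteq> {mzero C M (So L)}"
proof
  assume H2: "Hom C M (So L) = {mzero C M (So L)}"
  have kf: "kfunctor C So Sm" using S[unfolded serre_functor_def autoequiv_def, THEN conjunct1, THEN conjunct1] .
  have SL: "So L \<in> Ob C" using kfD(1)[OF kf] o by blast
  obtain \<eta> where b: "bij_betw (\<eta>) (Hom C L M) (lin_funcs C M (So L))"
    using serreD[OF S o] by blast
  have ls: "lin_funcs C M (So L) \<subseteq> {\<lambda>_. 0}" using lin_single[OF k o(2) SL H2] .
  have z: "mzero C L M \<in> Hom C L M" using mzero_in[OF k o] .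
  have "\<exists>u\<in>Hom C L M. u \<noteq> mzero C L M"
  proof (rule ccontr)
    assume "\<not> (\<exists>u\<in>Hom C L M. u \<noteq> mzero C L M)"
    then have "Hom C L M \<subseteq> {mzero C L M}" by auto
    then show False using H z by auto
  qed
  then obtain u where u: "u \<in> Hom C L M" "u \<noteq> mzero C L M" by (elim bexE)
  have i1: "\<eta> u \<in> lin_funcs C M (So L)" using bij_betwE[OF b] u(1) by blast
  have i2: "\<eta> (mzero C L M) \<in> lin_funcs C M (So L)" using bij_betwE[OF b] z by blast
  have e1: "\<eta> u = (\<lambda>_. 0)" using subsetD[OF ls i1] by simp
  have e2: "\<eta> (mzero C L M) = (\<lambda>_. 0)" using subsetD[OF ls i2] by simp
  have "u = mzero C L M" using bij_betw_imp_inj_on[OF b] u(1) z e1 e2 unfolding inj_on_def by metis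
  then show False using u by simp
qed


theorem proposition3p8:
  fixes C :: "('o, 'm, 'k::field) tricat"
    and So :: "'o \<Rightarrow> 'o" and Sm :: "'m \<Rightarrow> 'm"
    and Z :: "'o \<Rightarrow> complex" and P :: "real \<Rightarrow> 'o set"
    and s :: real
  assumes "triangulated C"
    and "\<exists>X\<in>Ob C. \<not> is_zero C X"
    and "serre_functor C So Sm"
    and "stability_condition C Z P"
    and "functor_phase C P So s"
  shows "gldim C P = ereal s"
proof -
  note t = assms(1) and S = assms(3)
  have k: "klinear C" using triD[OF t] by simp
  have c: "category C" using kl_cat[OF k] .
  have sl: "slicing C P" using assms(4) unfolding stability_condition_def by (elim conjE)
  have kf: "kfunctor C So Sm" using S[unfolded serre_functor_def autoequiv_def, THEN conjunct1, THEN conjunct1] .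
  have SOb: "\<And>X. X \<in> Ob C \<Longrightarrow> So X \<in> Ob C" using kfD(1)[OF kf] by blast
  have POb: "\<And>A \<phi>. A \<in> P \<phi> \<Longrightarrow> A \<in> Ob C" using slD(1)[OF sl] by blast
  have fp1: "\<And>E. E \<in> semistables P \<Longrightarrow> So E \<in> semistables P"
    and fp2: "\<And>E. E \<in> semistables P \<Longrightarrow> \<not> is_zero C E \<Longrightarrow> phase P (So E) - phase P E = s"
    using assms(5) unfolding functor_phase_def by blast+
  have key: "\<exists>\<psi>. So A \<in> P \<psi> \<and> \<not> is_zero C (So A) \<and> \<psi> = \<phi> + s \<and> Hom C M (So A) \<noteq> {mzero C M (So A)}"
    if A: "A \<in> P \<phi>" "\<not> is_zero C A" and M: "M \<in> Ob C" and H: "Hom C A M \<noteq> {mzero C A M}" for A \<phi> M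
  proof -
    have Ao: "A \<in> Ob C" using POb A(1) .
    have H2: "Hom C M (So A) \<noteq> {mzero C M (So A)}" using serre_nonzero[OF k S Ao M H] .
    have SAo: "So A \<in> Ob C" using SOb Ao .
    have nz: "\<not> is_zero C (So A)" using zero_hom_single[OF k M SAo] H2 by blast
    have ssA: "A \<in> semistables P" using A unfolding semistables_def by blast
    then obtain \<psi> where psi: "So A \<in> P \<psi>" using fp1 unfolding semistables_def by blast
    have "phase P (So A) = \<psi>" using phase_unique[OF k sl psi nz] .
    moreover have "phase P A = \<phi>" using phase_unique[OF k sl A] .
    ultimately have "\<psi> = \<phi> + s" using fp2[OF ssA A(2)] by simp
    then show ?thesis using psi nz H2 by blast
  qed
  define SS where "SS = {ereal (\<phi>2 - \<phi>1) | \<phi>1 \<phi>2. \<exists>A1\<in>P \<phi>1. \<exists>A2\<in>P \<phi>2.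
      \<not> is_zero C A1 \<and> \<not> is_zero C A2 \<and> Hom C A1 A2 \<noteq> {mzero C A1 A2}}"
  have up: "x \<le> ereal s" if xin: "x \<in> SS" for x
  proof -
    obtain \<phi>1 \<phi>2 A1 A2 where x: "x = ereal (\<phi>2 - \<phi>1)" and A: "A1 \<in> P \<phi>1" "A2 \<in> P \<phi>2"
      "\<not> is_zero C A1" "\<not> is_zero C A2" "Hom C A1 A2 \<noteq> {mzero C A1 A2}"
      using xin unfolding SS_def by blast
    obtain \<psi> where psi: "So A1 \<in> P \<psi>" "\<psi> = \<phi>1 + s" "Hom C A2 (So A1) \<noteq> {mzero C A2 (So A1)}"
      using key[OF A(1,3) POb[OF A(2)] A(5)] by blast
    have "\<not> \<phi>2 > \<psi>"
    proof
      assume "\<phi>2 > \<psi>"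
      then have "Hom C A2 (So A1) = {mzero C A2 (So A1)}"
        using spec[OF spec[OF slD(2)[OF sl], of \<phi>2], of \<psi>] A(2) psi(1) by blast
      then show False using psi(3) by simp
    qed
    then show ?thesis using x psi(2) by simp
  qed
  obtain \<phi> A where A: "A \<in> P \<phi>" "\<not> is_zero C A" using exists_nonzero_ss[OF t sl assms(2)] by blast
  have Ao: "A \<in> Ob C" using POb A(1) .
  have "Hom C A A \<noteq> {mzero C A A}" using idm_in[OF c Ao] A(2) Ao unfolding is_zero_def by auto
  then obtain \<psi> where psi: "So A \<in> P \<psi>" "\<not> is_zero C (So A)" "\<psi> = \<phi> + s" "Hom C A (So A) \<noteq> {mzero C A (So A)}"
    using key[OF A Ao] by blast
  have "ereal (\<psi> - \<phi>) \<in> SS" unfolding SS_def using A psi by blast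
  then have sin: "ereal s \<in> SS" using psi(3) by simp
  have "Sup SS = ereal s"
    by (rule antisym) (use up sin in \<open>auto intro: Sup_least Sup_upper\<close>)
  then show ?thesis unfolding gldim_def SS_def by simp
qed

end
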